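(* Fix $2\le d\le7$ and let $(\hat a_*,\hat b_*,\hat c_* )$ be given by: $d=2$: $(0.5,0.7,0.27)$; $d=3$: $(0.4,0.6,0.2)$; $d=4$: $(0.3,0.5,0.1)$; $d=5$: $(0.3,0.4,0.1)$; $d=6$: $(0.27,0.32,0.1)$; $d=7$: $(0.26,0.27,0.01)$. Then for any $0\le c<1$, $\psi^{(k)}(\mathcal{S}_{0,1,c})\subset\mathcal{S}_{\hat a_*,\hat b_*,\hat c_*}$ for all large enough $k$.
   Context: For a probability distribution $z$ on $\mathbb{Z}$ set $A(z)_i=(z_{i-1}+z_i+z_{i+1})^d$, $F(z)=A(z)/\sum_iA(z)_i$. $\mathcal{E}$ is the set of symmetric probability distributions on $\mathbb{Z}$ whose support is an interval or all of $\mathbb{Z}$. $\mathsf R\colon\mathcal{E}\to[0,\infty)^{\{1,2,\dots\}}$, $\mathsf R(z)_i=z_i/z_{i-1}$ if $z_{i-1}\ne0$ and $0$ otherwise; $\mathsf R$ is injective, $\mathcal{R}:=\mathsf R(\mathcal{E})$, $\psi:=\mathsf R\circ F\circ\mathsf R^{-1}\colon\mathcal{R}\to\mathcal{R}$, i.e. $\psi(x)_1=\big(\frac{1+x_1+x_1x_2}{1+2x_1}\big)^d$ and $\psi(x)_n=x_{n-1}^d\big(\frac{1+x_n+x_nx_{n+1}}{1+x_{n-1}+x_{n-1}x_n}\big)^d$ for $n\ge2$; $\psi^{(k)}$ is its $k$-fold iterate. For reals $a,b,c$, $\mathcal{S}_{a,b,c}:=\{x\in\mathcal{R}: a\le x_1\le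 b,\ 0\le x_n\le c\ \forall n\ge2\}$. *)

theory Defs
  imports "HOL-Analysis.Analysis"
begin

text \<open>The class E: symmetric probability distributions on the integers whose support
  is an interval or all of the integers (equivalently: order-convex support, which is
  automatically nonempty and symmetric).\<close>
definition Edist :: "(int \<Rightarrow> real) set" where
  "Edist = {z. (\<forall>i. 0 \<le> z i) \<and> (z has_sum 1) UNIV \<and> (\<forall>i. z (-i) = z i)
              \<and> (\<forall>i j k. i \<le> j \<and> j \<le> k \<and> z i \<noteq> 0 \<and> z k \<noteq> 0 \<longrightarrow> z j \<noteq> 0)}"

text \<open>The ratio map R. Sequences indexed by 1,2,...; the unused entry at index 0 is set to 0.\<close>
definition Rmap :: "(int \<Rightarrow> real) \<Rightarrow> (nat \<Rightarrow> real)" where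
  "Rmap z = (\<lambda>i. if i = 0 then 0
                 else if z (int i - 1) \<noteq> 0 then z (int i) / z (int i - 1) else 0)"

definition Rset :: "(nat \<Rightarrow> real) set" where
  "Rset = Rmap ` Edist"

text \<open>The map psi = R o F o R^{-1}, written out explicitly.\<close>
definition psi :: "nat \<Rightarrow> (nat \<Rightarrow> real) \<Rightarrow> (nat \<Rightarrow> real)" where
  "psi d x = (\<lambda>n. if n = 0 then 0
                  else if n = 1 then ((1 + x 1 + x 1 * x 2) / (1 + 2 * x 1)) ^ d
                  else x (n - 1) ^ d *
                       ((1 + x n + x n * x (n + 1)) / (1 + x (n - 1) + x (n - 1) * x n)) ^ d)"

definition Sset :: "real \<Rightarrow> real \<Rightarrow> real \<Rightarrow> (nat \<Rightarrow> real) set" where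
  "Sset a b c = {x \<in> Rset. a \<le> x 1 \<and> x 1 \<le> b \<and> (\<forall>n\<ge>2. 0 \<le> x n \<and> x n \<le> c)}"

definition ahat :: "nat \<Rightarrow> real" where
  "ahat d = (if d = 2 then 0.5 else if d = 3 then 0.4 else if d = 4 then 0.3
             else if d = 5 then 0.3 else if d = 6 then 0.27 else 0.26)"

definition bhat :: "nat \<Rightarrow> real" where
  "bhat d = (if d = 2 then 0.7 else if d = 3 then 0.6 else if d = 4 then 0.5
             else if d = 5 then 0.4 else if d = 6 then 0.32 else 0.27)"

definition chat :: "nat \<Rightarrow> real" where
  "chat d = (if d = 2 then 0.27 else if d = 3 then 0.2 else if d = 4 then 0.1
             else if d = 5 then 0.1 else if d = 6 then 0.1 else 0.01)"

end

theory Submission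
  imports Defs
begin

definition Pp :: "(nat \<Rightarrow> real) \<Rightarrow> nat \<Rightarrow> real" where
  "Pp x m = (\<Prod>j\<in>{1..m}. x j)"

lemma Pp_0[simp]: "Pp x 0 = 1" by (simp add: Pp_def)
lemma Pp_Suc: "Pp x (Suc m) = Pp x m * x (Suc m)"
  by (simp add: Pp_def prod.nat_ivl_Suc' mult.commute)

lemma rset_props:
  assumes "x \<in> Rset"
  shows "x 0 = 0" "\<And>n. 0 \<le> x n" "\<And>n. 1 \<le> n \<Longrightarrow> x n = 0 \<Longrightarrow> x (Suc n) = 0"
proof -
  obtain z where z: "z \<in> Edist" and xz: "x = Rmap z" using assms unfolding Rset_def by blast
  have nn: "\<And>i. 0 \<le> z i" and sym: "\<And>i. z (-i) = z i"
    and cv: "\<And>i j k. i \<le> j \<Longrightarrow> j \<le> k \<Longrightarrow> z i \<noteq> 0 \<Longrightarrow> z k \<noteq> 0 \<Longrightarrow> z j \<noteq> 0"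
    using z unfolding Edist_def by blast+
  show "x 0 = 0" using xz by (simp add: Rmap_def)
  show "0 \<le> x n" for n using xz nn by (simp add: Rmap_def)
  fix n :: nat assume n1: "1 \<le> n" and xn: "x n = 0"
  have "z (int n) = 0"
  proof (rule ccontr)
    assume h: "z (int n) \<noteq> 0"
    then have "z (- int n) \<noteq> 0" using sym by simp
    then have "z (int n - 1) \<noteq> 0" using cv[of "- int n" "int n - 1" "int n"] h n1 by simp
    then have "x n = z (int n) / z (int n - 1)" using xz n1 by (simp add: Rmap_def)
    then show False using xn h \<open>z (int n - 1) \<noteq> 0\<close> by simp
  qed
  then show "x (Suc n) = 0" using xz by (simp add: Rmap_def)
qed

lemma rset_intro:
  fixes x :: "nat \<Rightarrow> real" and c :: real
  assumes x0: "x 0 = 0" and nn: "\<And>n. 0 \<le> x n" and x1: "x 1 \<le> 1"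
    and xc: "\<And>n. 2 \<le> n \<Longrightarrow> x n \<le> c" and c1: "c < 1"
    and pr: "\<And>n. 1 \<le> n \<Longrightarrow> x n = 0 \<Longrightarrow> x (Suc n) = 0"
  shows "x \<in> Rset"
proof -
  have c0: "0 \<le> c" using nn[of 2] xc[of 2] by simp
  have propag: "1 \<le> j \<Longrightarrow> j \<le> k \<Longrightarrow> x j = 0 \<Longrightarrow> x k = 0" for j k
  proof (induction k)
    case 0 then show ?case by simp
  next
    case (Suc k)
    show ?case
    proof (cases "j = Suc k")
      case True then show ?thesis using Suc by simp
    next
      case False then have "j \<le> k" using Suc by simp
      then show ?thesis using Suc pr[of k] by simp
    qed
  qed
  have Pnn: "0 \<le> Pp x m" for m unfolding Pp_def by (simp add: prod_nonneg nn)
  have Pb: "Pp x (Suc m) \<le> c ^ m" for m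
  proof (induction m)
    case 0 then show ?case using x1 by (simp add: Pp_Suc)
  next
    case (Suc m)
    have "Pp x (Suc (Suc m)) = Pp x (Suc m) * x (Suc (Suc m))" by (rule Pp_Suc)
    also have "\<dots> \<le> c ^ m * c"
      using Suc Pnn[of "Suc m"] nn[of "Suc (Suc m)"] xc[of "Suc (Suc m)"] c0
      by (intro mult_mono) auto
    finally show ?case by (simp add: mult.commute)
  qed
  have Pz: "Pp x m = 0 \<Longrightarrow> x (Suc m) = 0" for m
  proof -
    assume "Pp x m = 0"
    then obtain j where "j \<in> {1..m}" "x j = 0" unfolding Pp_def by auto
    then show ?thesis using propag[of j "Suc m"] by auto
  qed
  have Pmono: "m' \<le> m \<Longrightarrow> Pp x m \<noteq> 0 \<Longrightarrow> Pp x m' \<noteq> 0" for m m'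
  proof -
    assume "m' \<le> m" "Pp x m \<noteq> 0"
    then show ?thesis unfolding Pp_def
      by (smt (verit, ccfv_SIG) atLeastAtMost_iff finite_atLeastAtMost order_trans prod_zero_iff)
  qed
  define w where "w i = Pp x (nat \<bar>i\<bar>)" for i :: int
  define h where "h i = c ^ (nat \<bar>i\<bar> - 1)" for i :: int
  have wh: "w i \<le> h i" for i
  proof (cases "nat \<bar>i\<bar>")
    case 0 then show ?thesis by (simp add: w_def h_def)
  next
    case (Suc m) then show ?thesis using Pb[of m] by (simp add: w_def h_def)
  qed
  have hs1: "(h \<circ> int) summable_on UNIV"
  proof -
    have "summable (\<lambda>n. c ^ (Suc n - 1))" using c0 c1 by (simp add: summable_geometric)
    then have "summable (\<lambda>n::nat. c ^ (n - 1))" by (subst summable_Suc_iff[symmetric])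
    then show ?thesis using c0
      by (subst summable_on_UNIV_nonneg_real_iff) (auto simp: h_def o_def)
  qed
  have hs2: "(h \<circ> (\<lambda>n. - int (Suc n))) summable_on UNIV"
  proof -
    have "summable (\<lambda>n. c ^ n)" using c0 c1 by (simp add: summable_geometric)
    moreover have "h \<circ> (\<lambda>n. - int (Suc n)) = (\<lambda>n. c ^ n)"
      by (rule ext) (simp add: h_def nat_add_distrib del: of_nat_Suc)
    ultimately show ?thesis using c0
      by (subst summable_on_UNIV_nonneg_real_iff) auto
  qed
  have "h summable_on (range int)" using hs1 by (subst summable_on_reindex) (auto simp: inj_on_def)
  moreover have "h summable_on (range (\<lambda>n. - int (Suc n)))"
    using hs2 by (subst summable_on_reindex) (auto simp: inj_on_def)
  moreover have "range int \<inter> range (\<lambda>n. - int (Suc n)) = {}" by auto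
  ultimately have "h summable_on (range int \<union> range (\<lambda>n. - int (Suc n)))"
    by (rule summable_on_Un_disjoint)
  moreover have "range int \<union> range (\<lambda>n. - int (Suc n)) = UNIV"
  proof -
    have "i \<in> range int \<union> range (\<lambda>n. - int (Suc n))" for i :: int
    proof (cases "i \<ge> 0")
      case True then show ?thesis by (metis UnI1 nonneg_int_cases rangeI)
    next
      case False then have "i = - int (Suc (nat (- i - 1)))" by simp
      then show ?thesis by blast
    qed
    then show ?thesis by blast
  qed
  ultimately have hs: "h summable_on UNIV" by simp
  have ws: "w summable_on UNIV"
    by (rule summable_on_comparison_test[OF hs]) (auto simp: wh[unfolded w_def] w_def Pnn)
  define S where "S = infsum w UNIV"
  have wS: "(w has_sum S) UNIV" using ws S_def by simp
  have "sum w {0} \<le> S"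
    by (rule finite_sum_le_has_sum[OF wS]) (auto simp: w_def Pnn)
  then have S1: "1 \<le> S" by (simp add: w_def)
  define z where "z i = w i / S" for i
  have "((\<lambda>i. w i * (1 / S)) has_sum (S * (1 / S))) UNIV" by (rule has_sum_cmult_left[OF wS])
  then have zs: "(z has_sum 1) UNIV" using S1 unfolding z_def[abs_def] by simp
  have zE: "z \<in> Edist"
    unfolding Edist_def
  proof (intro CollectI conjI allI impI)
    show "0 \<le> z i" for i using S1 Pnn by (simp add: z_def w_def)
    show "(z has_sum 1) UNIV" by (rule zs)
    show "z (- i) = z i" for i by (simp add: z_def w_def)
    fix i j k :: int assume h: "i \<le> j \<and> j \<le> k \<and> z i \<noteq> 0 \<and> z k \<noteq> 0"
    have "nat \<bar>j\<bar> \<le> max (nat \<bar>i\<bar>) (nat \<bar>k\<bar>)" using h by auto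
    moreover have "Pp x (max (nat \<bar>i\<bar>) (nat \<bar>k\<bar>)) \<noteq> 0"
      using h by (simp add: z_def w_def max_def)
    ultimately have "Pp x (nat \<bar>j\<bar>) \<noteq> 0" using Pmono by blast
    then show "z j \<noteq> 0" using S1 by (simp add: z_def w_def)
  qed
  have "Rmap z = x"
  proof
    fix n
    show "Rmap z n = x n"
    proof (cases "n = 0")
      case True then show ?thesis using x0 by (simp add: Rmap_def)
    next
      case False
      then obtain m where m: "n = Suc m" using not0_implies_Suc by blast
      have e1: "nat \<bar>int n - 1\<bar> = m" using m by simp
      have e2: "nat \<bar>int n\<bar> = Suc m" using m by simp
      show ?thesis
      proof (cases "Pp x m = 0")
        case True
        then show ?thesis using Pz[of m] m S1 e1 by (simp add: Rmap_def z_def w_def)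
      next
        case False
        then show ?thesis using m S1 e1 e2 by (simp add: Rmap_def z_def w_def Pp_Suc)
      qed
    qed
  qed
  then show ?thesis unfolding Rset_def using zE by blast
qed



definition T3 :: "real \<Rightarrow> real \<Rightarrow> real \<Rightarrow> real" where
  "T3 p q r = p * (1 + q + q * r) / (1 + p + p * q)"

lemma T3_nonneg: "0 \<le> p \<Longrightarrow> 0 \<le> q \<Longrightarrow> 0 \<le> r \<Longrightarrow> 0 \<le> T3 p q r"
  by (simp add: T3_def)

lemma fle: "0 < (B::real) \<Longrightarrow> 0 < D \<Longrightarrow> A * D \<le> C * B \<Longrightarrow> A / B \<le> C / D"
  by (simp add: divide_simps)

lemma T3_mono:
  assumes "0 \<le> p" "p \<le> P" "0 \<le> q" "q \<le> Q" "0 \<le> r" "r \<le> R"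
  shows "T3 p q r \<le> T3 P Q R"
proof -
  have P0: "0 \<le> P" "0 \<le> Q" "0 \<le> R" using assms by linarith+
  have pos: "0 < 1 + s + s * t" if "0 \<le> s" "0 \<le> t" for s t :: real
    using that by (simp add: add_pos_nonneg)
  have "T3 p q r \<le> T3 P q r"
  proof -
    have k: "0 \<le> 1 + q + q * r" using assms by simp
    have "p * (1 + P * (1 + q)) \<le> P * (1 + p * (1 + q))"
      using assms by (simp add: algebra_simps)
    then have "(1 + q + q * r) * (p * (1 + P * (1 + q))) \<le> (1 + q + q * r) * (P * (1 + p * (1 + q)))"
      using k by (rule mult_left_mono)
    then show ?thesis unfolding T3_def
      by (intro fle pos) (auto simp: assms P0 algebra_simps)
  qed
  also have "\<dots> \<le> T3 P Q r"
  proof -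
    have "(1 + q + q * r) * (1 + P + P * Q) \<le> (1 + Q + Q * r) * (1 + P + P * q)"
    proof -
      have "0 \<le> (1 + r) * (1 + P) - P" using assms by (simp add: algebra_simps add_nonneg_nonneg mult_nonneg_nonneg)
      then have "0 \<le> (Q - q) * ((1 + r) * (1 + P) - P)" using assms by (intro mult_nonneg_nonneg) auto
      then show ?thesis by (simp add: algebra_simps)
    qed
    then have "P * ((1 + q + q * r) * (1 + P + P * Q)) \<le> P * ((1 + Q + Q * r) * (1 + P + P * q))"
      using assms by (intro mult_left_mono) auto
    then show ?thesis unfolding T3_def
      by (intro fle pos) (auto simp: assms P0 algebra_simps)
  qed
  also have "\<dots> \<le> T3 P Q R"
    unfolding T3_def using assms P0
    by (intro divide_right_mono mult_left_mono) (auto intro: mult_left_mono add_mono)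
  finally show ?thesis .
qed

lemma psi_n: "2 \<le> n \<Longrightarrow> 0 \<le> x (n-1) \<Longrightarrow> 0 \<le> x n \<Longrightarrow> psi d x n = T3 (x (n-1)) (x n) (x (n+1)) ^ d"
  by (simp add: psi_def T3_def power_mult_distrib power_divide)

lemma psi_step:
  fixes a b c a' b' c' :: real
  assumes d1: "1 \<le> d" and a0: "0 \<le> a" and ab: "a \<le> b" and b1: "b \<le> 1" and c0: "0 \<le> c" and c1: "c < 1"
    and c'1: "c' < 1"
    and ha: "a' \<le> ((1 + b) / (1 + 2 * b)) ^ d"
    and hb: "((1 + a + a * c) / (1 + 2 * a)) ^ d \<le> b'"
    and hc1: "(b * (1 + c + c ^ 2) / (1 + b + b * c)) ^ d \<le> c'"
    and hc2: "c ^ d \<le> c'"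
    and x: "x \<in> Sset a b c"
  shows "psi d x \<in> Sset a' b' c'"
proof -
  have xR: "x \<in> Rset" and xa: "a \<le> x 1" and xb: "x 1 \<le> b" and xc: "\<And>n. 2 \<le> n \<Longrightarrow> x n \<le> c"
    using x unfolding Sset_def by auto
  note xp = rset_props[OF xR]
  define y where "y = psi d x"
  define u where "u = (1 + x 1 + x 1 * x 2) / (1 + 2 * x 1)"
  have x1: "0 \<le> x 1" using xp by auto
  have x2: "0 \<le> x 2" "x 2 \<le> c" using xp xc by auto
  have y1: "y 1 = u ^ d" by (simp add: y_def u_def psi_def)
  have upos: "0 < u" unfolding u_def using x1 x2 by (simp add: add_pos_nonneg)
  have ule1: "u \<le> 1" unfolding u_def using x1 x2 c1
    using mult_left_mono[of "x 2" 1 "x 1"] by (simp add: divide_simps)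
  have ulo: "(1 + b) / (1 + 2 * b) \<le> u"
  proof -
    have "(1 + b) / (1 + 2 * b) \<le> (1 + x 1) / (1 + 2 * x 1)"
      using x1 xb by (simp add: divide_simps algebra_simps)
    also have "\<dots> \<le> u" unfolding u_def using x1 x2
      by (intro divide_right_mono) (auto intro: mult_nonneg_nonneg)
    finally show ?thesis .
  qed
  have uhi: "u \<le> (1 + a + a * c) / (1 + 2 * a)"
  proof -
    have "u \<le> (1 + x 1 + x 1 * c) / (1 + 2 * x 1)" unfolding u_def using x1 x2
      by (intro divide_right_mono add_left_mono mult_left_mono) auto
    also have "\<dots> \<le> (1 + a + a * c) / (1 + 2 * a)"
    proof -
      have "0 \<le> (x 1 - a) * (1 - c)" using xa c1 by auto
      then show ?thesis using a0 x1 by (simp add: divide_simps) (simp add: algebra_simps)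
    qed
    finally show ?thesis .
  qed
  have Y1a: "a' \<le> y 1" using ha y1 ulo power_mono[OF ulo] upos
    by (smt (verit, ccfv_SIG) a0 ab add_nonneg_nonneg divide_nonneg_nonneg mult_nonneg_nonneg)
  have Y1b: "y 1 \<le> b'" using order.trans[OF power_mono[OF uhi less_imp_le[OF upos]] hb] y1 by simp
  have Y1c: "y 1 \<le> 1" using y1 power_mono[OF ule1] upos by auto
  have ynn: "0 \<le> y n" for n
  proof -
    consider "n = 0" | "n = 1" | "2 \<le> n" by linarith
    then show ?thesis
    proof cases
      case 1 then show ?thesis by (simp add: y_def psi_def)
    next
      case 2 then show ?thesis using y1 upos by simp
    next
      case 3 then show ?thesis using psi_n[OF 3] xp T3_nonneg by (simp add: y_def)
    qed
  qed
  have Y2: "y 2 \<le> c'"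
  proof -
    have "T3 (x 1) (x 2) (x 3) \<le> T3 b c c"
      using x1 x2 xb xp xc[of 3] by (intro T3_mono) auto
    moreover have "T3 b c c = b * (1 + c + c ^ 2) / (1 + b + b * c)"
      by (simp add: T3_def power2_eq_square)
    ultimately have "T3 (x 1) (x 2) (x 3) ^ d \<le> (b * (1 + c + c ^ 2) / (1 + b + b * c)) ^ d"
      using x1 x2 xp T3_nonneg by (intro power_mono) auto
    then show ?thesis using hc1 psi_n[of 2 x d] x1 x2 by (simp add: y_def numeral_2_eq_2 numeral_3_eq_3)
  qed
  have Y3: "y n \<le> c'" if n3: "3 \<le> n" for n
  proof -
    have "T3 (x (n-1)) (x n) (x (n+1)) \<le> T3 c c c"
      using xp xc[of "n-1"] xc[of n] xc[of "n+1"] n3 by (intro T3_mono) auto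
    moreover have "T3 c c c = c"
    proof -
      have "0 < 1 + c + c * c" using c0 by (simp add: add_pos_nonneg)
      then show ?thesis unfolding T3_def by simp
    qed
    ultimately have "T3 (x (n-1)) (x n) (x (n+1)) ^ d \<le> c ^ d"
      using xp T3_nonneg by (intro power_mono) auto
    then show ?thesis using hc2 psi_n[of n x d] xp n3 by (simp add: y_def)
  qed
  have Yc: "y n \<le> c'" if "2 \<le> n" for n
    using Y2 Y3 that by (cases "n = 2") auto
  have Yp: "y (Suc n) = 0" if n1: "1 \<le> n" and yn: "y n = 0" for n
  proof (cases "n = 1")
    case True then show ?thesis using yn y1 upos by simp
  next
    case False
    then have n2: "2 \<le> n" using n1 by simp
    have "y n = x (n-1) ^ d * ((1 + x n + x n * x (n + 1)) / (1 + x (n - 1) + x (n - 1) * x n)) ^ d"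
      using n2 by (simp add: y_def psi_def)
    moreover have "0 < 1 + x n + x n * x (n + 1)" "0 < 1 + x (n - 1) + x (n - 1) * x n"
      using xp by (simp_all add: add_pos_nonneg)
    ultimately have "x (n-1) = 0" using yn by (simp del: One_nat_def)
    then have "x n = 0" using xp(3)[of "n-1"] n2 by simp
    then show ?thesis using d1 n2 by (simp add: y_def psi_def)
  qed
  have "y \<in> Rset"
    by (rule rset_intro[OF _ ynn Y1c Yc c'1 Yp]) (auto simp: y_def psi_def)
  then show ?thesis unfolding Sset_def using Y1a Y1b ynn Yc by (simp add: y_def)
qed



lemma cast_le:
  fixes X Y P Q :: nat
  assumes "X * Q \<le> P * Y" "0 < Y" "0 < Q"
  shows "real X / real Y \<le> real P / real Q"
proof (rule fle)
  show "real X * real Q \<le> real P * real Y" using assms(1) by (metis of_nat_le_iff of_nat_mult)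
qed (use assms in auto)

lemma psi_step_nat:
  fixes A B C A' B' C' N :: nat
  assumes d1: "1 \<le> d" and N0: "0 < N" and AB: "A \<le> B" and BN: "B \<le> N" and CN: "C < N" and CN': "C' < N"
    and h1: "A' * (N + 2 * B) ^ d \<le> (N + B) ^ d * N"
    and h2: "(N * N + A * N + A * C) ^ d * N \<le> B' * (N * (N + 2 * A)) ^ d"
    and h3: "(B * (N * N + N * C + C * C)) ^ d * N \<le> C' * (N * (N * N + B * N + B * C)) ^ d"
    and h4: "C ^ d * N \<le> C' * N ^ d"
  shows "psi d ` Sset (A / N) (B / N) (C / N) \<subseteq> Sset (A' / N) (B' / N) (C' / N)"
proof
  fix y assume "y \<in> psi d ` Sset (A / N) (B / N) (C / N)"
  then obtain x where x: "x \<in> Sset (A / N) (B / N) (C / N)" and y: "y = psi d x" by blast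
  have n0: "0 < real N" using N0 by simp
  have e1: "((1 + B / N) / (1 + 2 * (B / N))) ^ d = real ((N + B) ^ d) / real ((N + 2 * B) ^ d)"
  proof -
    have "(1 + B / N) / (1 + 2 * (B / N)) = real (N + B) / real (N + 2 * B)"
      using n0 add_pos_nonneg[OF n0, of "2 * real B"] by (simp add: divide_simps; simp add: algebra_simps)
    then show ?thesis by (simp add: power_divide)
  qed
  have e2: "((1 + A / N + A / N * (C / N)) / (1 + 2 * (A / N))) ^ d
      = real ((N * N + A * N + A * C) ^ d) / real ((N * (N + 2 * A)) ^ d)"
  proof -
    have "(1 + A / N + A / N * (C / N)) / (1 + 2 * (A / N)) = real (N * N + A * N + A * C) / real (N * (N + 2 * A))"
      using n0 add_pos_nonneg[OF n0, of "2 * real A"] by (simp add: divide_simps; simp add: algebra_simps)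
    then show ?thesis by (simp add: power_divide)
  qed
  have e3: "(B / N * (1 + C / N + (C / N) ^ 2) / (1 + B / N + B / N * (C / N))) ^ d
      = real ((B * (N * N + N * C + C * C)) ^ d) / real ((N * (N * N + B * N + B * C)) ^ d)"
  proof -
    have "B / N * (1 + C / N + (C / N) ^ 2) / (1 + B / N + B / N * (C / N))
        = real (B * (N * N + N * C + C * C)) / real (N * (N * N + B * N + B * C))"
      using n0 add_pos_nonneg[OF mult_pos_pos[OF n0 n0], of "real B * real N + real B * real C"] by (simp add: divide_simps power2_eq_square; simp add: algebra_simps)
    then show ?thesis by (simp add: power_divide)
  qed
  have e4: "(C / N) ^ d = real (C ^ d) / real (N ^ d)" by (simp add: power_divide)
  show "y \<in> Sset (A' / N) (B' / N) (C' / N)" unfolding y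
  proof (rule psi_step[OF d1 _ _ _ _ _ _ _ _ _ _ x])
    show "0 \<le> real A / real N" by simp
    show "real A / real N \<le> real B / real N" using AB n0 by (simp add: divide_right_mono)
    show "real B / real N \<le> 1" using BN n0 by simp
    show "0 \<le> real C / real N" by simp
    show "real C / real N < 1" using CN n0 by simp
    show "real C' / real N < 1" using CN' n0 by simp
    show "real A' / real N \<le> ((1 + real B / real N) / (1 + 2 * (real B / real N))) ^ d"
      unfolding e1 by (rule cast_le) (use h1 N0 in auto)
    show "((1 + real A / real N + real A / real N * (real C / real N)) / (1 + 2 * (real A / real N))) ^ d \<le> real B' / real N"
      unfolding e2 by (rule cast_le) (use h2 N0 in auto)
    show "(real B / real N * (1 + real C / real N + (real C / real N)\<^sup>2) / (1 + real B / real N + real B / real N * (real C / real N))) ^ d \<le> real C' / real N"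
      unfolding e3 by (rule cast_le) (use h3 N0 in auto)
    show "(real C / real N) ^ d \<le> real C' / real N"
      unfolding e4 by (rule cast_le) (use h4 N0 in auto)
  qed
qed



lemma Sset_mono: "a \<le> a' \<Longrightarrow> b' \<le> b \<Longrightarrow> c' \<le> c \<Longrightarrow> Sset a' b' c' \<subseteq> Sset a b c"
  by (auto simp: Sset_def)

lemma iter_inv: "f ` S \<subseteq> S \<Longrightarrow> (f ^^ m) ` S \<subseteq> S"
  by (induction m) (auto simp: image_subset_iff)

definition phi :: "nat \<Rightarrow> real \<Rightarrow> real" where
  "phi d t = max (((1 + t + t ^ 2) / (2 + t)) ^ d) (t ^ d)"

lemma phi_props:
  assumes d2: "2 \<le> d" and t0: "0 \<le> t" and t1: "t < 1"
  shows "0 \<le> phi d t" "phi d t < 1" "psi d ` Sset 0 1 t \<subseteq> Sset 0 1 (phi d t)"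
    "t \<le> 1/2 \<Longrightarrow> phi d t \<le> 1/2"
    "1/2 \<le> t \<Longrightarrow> 101/100 * (1 - t) \<le> 1 - phi d t"
proof -
  define g where "g = (1 + t + t ^ 2) / (2 + t)"
  have g0: "0 \<le> g" using t0 by (simp add: g_def)
  have g1: "g < 1"
  proof -
    have "t ^ 2 < 1 ^ 2" using t0 t1 by (intro power_strict_mono) auto
    then have "1 + t + t ^ 2 < 1 * (2 + t)" by simp
    then show ?thesis unfolding g_def using t0 by (simp add: pos_divide_less_eq)
  qed
  have gd: "g ^ d \<le> g ^ 2" using g0 g1 d2 by (simp add: power_decreasing)
  have td: "t ^ d \<le> t ^ 2" using t0 t1 d2 by (simp add: power_decreasing)
  have pd: "phi d t = max (g ^ d) (t ^ d)" by (simp add: phi_def g_def)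
  show "0 \<le> phi d t" using pd t0 by (simp add: le_max_iff_disj)
  have "g ^ d < 1" using g0 g1 d2 by (simp add: power_less_one_iff)
  moreover have "t ^ d < 1" using t0 t1 d2 by (simp add: power_less_one_iff)
  ultimately show "phi d t < 1" using pd by simp
  show "psi d ` Sset 0 1 t \<subseteq> Sset 0 1 (phi d t)"
  proof
    fix y assume "y \<in> psi d ` Sset 0 1 t"
    then obtain x where x: "x \<in> Sset 0 1 t" and y: "y = psi d x" by blast
    show "y \<in> Sset 0 1 (phi d t)" unfolding y
    proof (rule psi_step[OF _ _ _ _ t0 t1 _ _ _ _ _ x])
      show "1 \<le> d" using d2 by simp
      show "phi d t < 1" using pd \<open>g ^ d < 1\<close> \<open>t ^ d < 1\<close> by simp
      show "(1 * (1 + t + t ^ 2) / (1 + 1 + 1 * t)) ^ d \<le> phi d t" by (simp add: phi_def)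
      show "t ^ d \<le> phi d t" by (simp add: phi_def)
    qed auto
  qed
  show "t \<le> 1/2 \<Longrightarrow> phi d t \<le> 1/2"
  proof -
    assume th: "t \<le> 1/2"
    have "10 * t ^ 2 + 3 * t \<le> 4"
    proof -
      have "t * t \<le> t * (1/2)" using t0 th by (intro mult_left_mono) auto
      then have "t ^ 2 \<le> t * (1/2)" by (simp add: power2_eq_square)
      then show ?thesis using th by simp
    qed
    then have "1 + t + t ^ 2 \<le> 7/10 * (2 + t)" by simp
    then have "g \<le> 7/10" unfolding g_def using t0 by (simp add: pos_divide_le_eq)
    then have "g ^ 2 \<le> (7/10) ^ 2" using g0 by (intro power_mono) auto
    then have "g ^ d \<le> 1/2" using gd by (simp add: power2_eq_square)
    moreover have "t ^ 2 \<le> (1/2) ^ 2" using t0 th by (intro power_mono) auto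
    then have "t ^ d \<le> 1/2" using td by (simp add: power2_eq_square)
    ultimately show ?thesis using pd by simp
  qed
  show "1/2 \<le> t \<Longrightarrow> 101/100 * (1 - t) \<le> 1 - phi d t"
  proof -
    assume th: "1/2 \<le> t"
    have "t ^ 2 \<le> 1 - 101/100 * (1 - t)"
    proof -
      have "0 \<le> (1 - t) * (t - 1/100)" using th t1 by (intro mult_nonneg_nonneg) auto
      moreover have "(1 - t) * (t - 1/100) = t - t ^ 2 - 1/100 + t/100" by (simp add: power2_eq_square field_simps)
      ultimately show ?thesis by (simp only: right_diff_distrib mult_1_right; linarith)
    qed
    moreover have "g ^ 2 \<le> 1 - 101/100 * (1 - t)"
    proof -
      have t3: "(1/2) ^ 3 \<le> t ^ 3" "(1/2)^2 \<le> t ^ 2" using th by (intro power_mono; simp)+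
      have t3b: "1/8 \<le> t ^ 3" "1/4 \<le> t ^ 2" using t3 by (simp_all add: power_divide)
      have q: "0 \<le> t ^ 3 + 199/100 * t ^ 2 + 96/100 * t - 104/100" using t3b th by linarith
      have "0 \<le> (1 - t) * (t ^ 3 + 199/100 * t ^ 2 + 96/100 * t - 104/100)"
        using q t1 by (intro mult_nonneg_nonneg) auto
      then have "(1 + t + t ^ 2) ^ 2 \<le> (1 - 101/100 * (1 - t)) * (2 + t) ^ 2"
      proof -
        have "(1 - t) * (t ^ 3 + 199/100 * t ^ 2 + 96/100 * t - 104/100) = (1 - 101/100 * (1 - t)) * (2 + t) ^ 2 - (1 + t + t ^ 2) ^ 2"
          by (simp add: power2_eq_square power3_eq_cube field_simps)
        then show ?thesis using \<open>0 \<le> (1 - t) * (t ^ 3 + 199/100 * t ^ 2 + 96/100 * t - 104/100)\<close> by linarith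
      qed
      moreover have "0 < (2 + t) ^ 2" using t0 by simp
      ultimately show ?thesis unfolding g_def power_divide by (simp add: pos_divide_le_eq)
    qed
    ultimately have "phi d t \<le> 1 - 101/100 * (1 - t)" using pd gd td by simp
    then show ?thesis by linarith
  qed
qed

lemma phase1:
  assumes d2: "2 \<le> d" and c0: "0 \<le> c" and c1: "c < 1"
  shows "\<exists>t. 0 \<le> t \<and> t < 1 \<and> (t \<le> 1/2 \<or> (101/100) ^ k * (1 - c) \<le> 1 - t)
           \<and> (psi d ^^ k) ` Sset 0 1 c \<subseteq> Sset 0 1 t"
proof (induction k)
  case 0 then show ?case using c0 c1 by (intro exI[of _ c]) auto
next
  case (Suc k)
  then obtain t where t: "0 \<le> t" "t < 1" "t \<le> 1/2 \<or> (101/100) ^ k * (1 - c) \<le> 1 - t"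
    "(psi d ^^ k) ` Sset 0 1 c \<subseteq> Sset 0 1 t" by blast
  note ph = phi_props[OF d2 t(1) t(2)]
  have img: "(psi d ^^ Suc k) ` Sset 0 1 c \<subseteq> Sset 0 1 (phi d t)"
    using t(4) ph(3) by (auto simp: image_subset_iff)
  have "phi d t \<le> 1/2 \<or> (101/100) ^ Suc k * (1 - c) \<le> 1 - phi d t"
  proof (cases "t \<le> 1/2")
    case True then show ?thesis using ph(4) by simp
  next
    case False
    then have "(101/100) ^ k * (1 - c) \<le> 1 - t" using t(3) by simp
    then have "(101/100) * ((101/100) ^ k * (1 - c)) \<le> 101/100 * (1 - t)" by (rule mult_left_mono) simp
    then have "(101/100) ^ Suc k * (1 - c) \<le> 101/100 * (1 - t)" by (simp only: power_Suc mult.assoc)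
    moreover have "101/100 * (1 - t) \<le> 1 - phi d t" using ph(5) False by simp
    ultimately have "(101/100) ^ Suc k * (1 - c) \<le> 1 - phi d t" by (rule order_trans)
    then show ?thesis by (rule disjI2)
  qed
  then show ?case using ph(1,2) img by blast
qed

lemma phase1':
  assumes d2: "2 \<le> d" and c0: "0 \<le> c" and c1: "c < 1"
  shows "\<exists>K. (psi d ^^ K) ` Sset 0 1 c \<subseteq> Sset 0 1 (1/2)"
proof -
  obtain k where k: "1 / (2 * (1 - c)) < (101/100) ^ k" using real_arch_pow[of "101/100"] by auto
  have "1 < (101/100) ^ k * (2 * (1 - c))"
    using k c1 pos_divide_less_eq[of "2 * (1 - c)" 1 "(101/100) ^ k"] by simp
  then have k': "1/2 < (101/100) ^ k * (1 - c)" by (simp add: algebra_simps)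
  obtain t where "0 \<le> t" "t < 1" "t \<le> 1/2 \<or> (101/100) ^ k * (1 - c) \<le> 1 - t"
    "(psi d ^^ k) ` Sset 0 1 c \<subseteq> Sset 0 1 t" using phase1[OF assms] by blast
  moreover have "t \<le> 1/2" using calculation k' by linarith
  ultimately show ?thesis using Sset_mono[of 0 0 1 1 t "1/2"] by blast
qed



definition bx :: "nat \<Rightarrow> nat \<times> nat \<times> nat \<Rightarrow> (nat \<Rightarrow> real) set" where
  "bx N X = (case X of (A, B, C) \<Rightarrow> Sset (real A / real N) (real B / real N) (real C / real N))"

fun chainok :: "nat \<Rightarrow> nat \<Rightarrow> (nat \<times> nat \<times> nat) list \<Rightarrow> bool" where
  "chainok d N ((A, B, C) # (A', B', C') # r) =
     (A \<le> B \<and> B \<le> N \<and> C < N \<and> C' < N \<and>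
      A' * (N + 2 * B) ^ d \<le> (N + B) ^ d * N \<and>
      (N * N + A * N + A * C) ^ d * N \<le> B' * (N * (N + 2 * A)) ^ d \<and>
      (B * (N * N + N * C + C * C)) ^ d * N \<le> C' * (N * (N * N + B * N + B * C)) ^ d \<and>
      C ^ d * N \<le> C' * N ^ d \<and> chainok d N ((A', B', C') # r))"
| "chainok d N _ = True"

lemma chain_img:
  assumes "1 \<le> d" "0 < N"
  shows "chainok d N (X # L) \<Longrightarrow> (psi d ^^ length L) ` bx N X \<subseteq> bx N (last (X # L))"
proof (induction L arbitrary: X)
  case Nil then show ?case by simp
next
  case (Cons Y L)
  obtain A B C where X: "X = (A, B, C)" by (cases X) auto
  obtain A' B' C' where Y: "Y = (A', B', C')" by (cases Y) auto
  have ok: "chainok d N (Y # L)" and st: "psi d ` bx N X \<subseteq> bx N Y"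
  proof -
    show "chainok d N (Y # L)" using Cons.prems unfolding X Y by simp
    have "psi d ` Sset (A / N) (B / N) (C / N) \<subseteq> Sset (A' / N) (B' / N) (C' / N)"
      using Cons.prems assms unfolding X Y by (intro psi_step_nat) auto
    then show "psi d ` bx N X \<subseteq> bx N Y" unfolding X Y bx_def by simp
  qed
  have "(psi d ^^ length (Y # L)) ` bx N X = (psi d ^^ length L) ` (psi d ` bx N X)"
    by (simp only: length_Cons funpow_Suc_right image_comp)
  also have "\<dots> \<subseteq> (psi d ^^ length L) ` bx N Y" using st by (rule image_mono)
  also have "\<dots> \<subseteq> bx N (last (Y # L))" using Cons.IH[OF ok] .
  finally show ?case by simp
qed

lemma chain_inv:
  assumes "1 \<le> d" "0 < N" "chainok d N [X, X]"
  shows "(psi d ^^ m) ` bx N X \<subseteq> bx N X"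
  using chain_img[OF assms(1,2) assms(3)] by (intro iter_inv) simp

lemma finish:
  assumes d2: "2 \<le> d" and c0: "0 \<le> c" and c1: "c < 1" and N0: "0 < N"
    and st: "Sset 0 1 (1/2) \<subseteq> bx N X0"
    and ch: "chainok d N (X0 # L)" and inv: "chainok d N [last (X0 # L), last (X0 # L)]"
    and tg: "bx N (last (X0 # L)) \<subseteq> Sset (ahat d) (bhat d) (chat d)"
  shows "\<exists>K. \<forall>k\<ge>K. (psi d ^^ k) ` Sset 0 1 c \<subseteq> Sset (ahat d) (bhat d) (chat d)"
proof -
  have d1: "1 \<le> d" using d2 by simp
  obtain K1 where K1: "(psi d ^^ K1) ` Sset 0 1 c \<subseteq> Sset 0 1 (1/2)" using phase1'[OF d2 c0 c1] by blast
  define Z where "Z = last (X0 # L)"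
  have "\<forall>k\<ge>K1 + length L. (psi d ^^ k) ` Sset 0 1 c \<subseteq> Sset (ahat d) (bhat d) (chat d)"
  proof (intro allI impI)
    fix k assume k: "K1 + length L \<le> k"
    then have ke: "k = (k - (K1 + length L)) + length L + K1" by simp
    have "(psi d ^^ k) ` Sset 0 1 c
        = (psi d ^^ (k - (K1 + length L))) ` ((psi d ^^ length L) ` ((psi d ^^ K1) ` Sset 0 1 c))"
      by (subst ke) (simp only: funpow_add image_comp o_assoc)
    also have "\<dots> \<subseteq> (psi d ^^ (k - (K1 + length L))) ` ((psi d ^^ length L) ` bx N X0)"
      using K1 st by (intro image_mono) auto
    also have "\<dots> \<subseteq> (psi d ^^ (k - (K1 + length L))) ` bx N Z"
      using chain_img[OF d1 N0 ch] unfolding Z_def by (intro image_mono)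
    also have "\<dots> \<subseteq> bx N Z" using chain_inv[OF d1 N0 inv] unfolding Z_def .
    also have "\<dots> \<subseteq> Sset (ahat d) (bhat d) (chat d)" using tg unfolding Z_def .
    finally show "(psi d ^^ k) ` Sset 0 1 c \<subseteq> Sset (ahat d) (bhat d) (chat d)" .
  qed
  then show ?thesis by blast
qed


lemma chain_join: "chainok d N (xs @ [y]) \<Longrightarrow> chainok d N (y # ys) \<Longrightarrow> chainok d N (xs @ y # ys)"
proof (induction xs)
  case Nil then show ?case by simp
next
  case (Cons a xs)
  note pr = Cons.prems and ih = Cons.IH
  obtain a1 a2 a3 where a: "a = (a1, a2, a3)" by (cases a)
  show ?case
  proof (cases xs)
    case Nil
    obtain y1 y2 y3 where "y = (y1, y2, y3)" by (cases y)
    then show ?thesis using pr Nil a by simp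
  next
    case (Cons b xs')
    obtain b1 b2 b3 where "b = (b1, b2, b3)" by (cases b)
    then show ?thesis using pr ih Cons a by simp
  qed
qed

lemma ok2: "chainok 2 10000 [(0, 10000, 5000), (4444, 10000, 4900), (4444, 7745, 4828), (4846, 7715, 3827), (4852, 7193, 3259), (4970, 6956, 2781), (5028, 6726, 2492)]"
proof -
  have r0: "chainok 2 10000 [(0, 10000, 5000), (4444, 10000, 4900), (4444, 7745, 4828), (4846, 7715, 3827), (4852, 7193, 3259), (4970, 6956, 2781), (5028, 6726, 2492)]" by simp
  then show ?thesis by this
qed
lemma case2:
  assumes "0 \<le> c" "c < 1"
  shows "\<exists>K. \<forall>k\<ge>K. (psi 2 ^^ k) ` Sset 0 1 c \<subseteq> Sset (ahat 2) (bhat 2) (chat 2)"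
proof (rule finish[OF _ assms _ _ ok2])
  have l: "last [(0, 10000, 5000), (4444, 10000, 4900), (4444, 7745, 4828), (4846, 7715, 3827), (4852, 7193, 3259), (4970, 6956, 2781), (5028, 6726, 2492)] = (5028, 6726, 2492)" by simp
  show "chainok 2 10000 [last [(0, 10000, 5000), (4444, 10000, 4900), (4444, 7745, 4828), (4846, 7715, 3827), (4852, 7193, 3259), (4970, 6956, 2781), (5028, 6726, 2492)], last [(0, 10000, 5000), (4444, 10000, 4900), (4444, 7745, 4828), (4846, 7715, 3827), (4852, 7193, 3259), (4970, 6956, 2781), (5028, 6726, 2492)]]" unfolding l by simp
  show "bx 10000 (last [(0, 10000, 5000), (4444, 10000, 4900), (4444, 7745, 4828), (4846, 7715, 3827), (4852, 7193, 3259), (4970, 6956, 2781), (5028, 6726, 2492)]) \<subseteq> Sset (ahat 2) (bhat 2) (chat 2)"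
    unfolding l bx_def by (simp, rule Sset_mono) (simp_all add: ahat_def bhat_def chat_def)
  show "Sset 0 1 (1/2) \<subseteq> bx 10000 (0, 10000, 5000)" by (simp add: bx_def)
qed simp_all


lemma ok3: "chainok 3 10000 [(0, 10000, 5000), (2962, 10000, 3430), (2962, 6764, 2423), (3617, 6340, 1094), (3739, 5376, 728), (4067, 5152, 497)]"
proof -
  have r0: "chainok 3 10000 [(0, 10000, 5000), (2962, 10000, 3430), (2962, 6764, 2423), (3617, 6340, 1094), (3739, 5376, 728), (4067, 5152, 497)]" by simp
  then show ?thesis by this
qed
lemma case3:
  assumes "0 \<le> c" "c < 1"
  shows "\<exists>K. \<forall>k\<ge>K. (psi 3 ^^ k) ` Sset 0 1 c \<subseteq> Sset (ahat 3) (bhat 3) (chat 3)"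
proof (rule finish[OF _ assms _ _ ok3])
  have l: "last [(0, 10000, 5000), (2962, 10000, 3430), (2962, 6764, 2423), (3617, 6340, 1094), (3739, 5376, 728), (4067, 5152, 497)] = (4067, 5152, 497)" by simp
  show "chainok 3 10000 [last [(0, 10000, 5000), (2962, 10000, 3430), (2962, 6764, 2423), (3617, 6340, 1094), (3739, 5376, 728), (4067, 5152, 497)], last [(0, 10000, 5000), (2962, 10000, 3430), (2962, 6764, 2423), (3617, 6340, 1094), (3739, 5376, 728), (4067, 5152, 497)]]" unfolding l by simp
  show "bx 10000 (last [(0, 10000, 5000), (2962, 10000, 3430), (2962, 6764, 2423), (3617, 6340, 1094), (3739, 5376, 728), (4067, 5152, 497)]) \<subseteq> Sset (ahat 3) (bhat 3) (chat 3)"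
    unfolding l bx_def by (simp, rule Sset_mono) (simp_all add: ahat_def bhat_def chat_def)
  show "Sset 0 1 (1/2) \<subseteq> bx 10000 (0, 10000, 5000)" by (simp add: bx_def)
qed simp_all


lemma ok4: "chainok 4 10000 [(0, 10000, 5000), (1975, 10000, 2401), (1975, 6343, 1127), (2693, 5846, 307), (2847, 4754, 201), (3271, 4571, 114)]"
proof -
  have r0: "chainok 4 10000 [(0, 10000, 5000), (1975, 10000, 2401), (1975, 6343, 1127), (2693, 5846, 307), (2847, 4754, 201), (3271, 4571, 114)]" by simp
  then show ?thesis by this
qed
lemma case4:
  assumes "0 \<le> c" "c < 1"
  shows "\<exists>K. \<forall>k\<ge>K. (psi 4 ^^ k) ` Sset 0 1 c \<subseteq> Sset (ahat 4) (bhat 4) (chat 4)"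
proof (rule finish[OF _ assms _ _ ok4])
  have l: "last [(0, 10000, 5000), (1975, 10000, 2401), (1975, 6343, 1127), (2693, 5846, 307), (2847, 4754, 201), (3271, 4571, 114)] = (3271, 4571, 114)" by simp
  show "chainok 4 10000 [last [(0, 10000, 5000), (1975, 10000, 2401), (1975, 6343, 1127), (2693, 5846, 307), (2847, 4754, 201), (3271, 4571, 114)], last [(0, 10000, 5000), (1975, 10000, 2401), (1975, 6343, 1127), (2693, 5846, 307), (2847, 4754, 201), (3271, 4571, 114)]]" unfolding l by simp
  show "bx 10000 (last [(0, 10000, 5000), (1975, 10000, 2401), (1975, 6343, 1127), (2693, 5846, 307), (2847, 4754, 201), (3271, 4571, 114)]) \<subseteq> Sset (ahat 4) (bhat 4) (chat 4)"
    unfolding l bx_def by (simp, rule Sset_mono) (simp_all add: ahat_def bhat_def chat_def)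
  show "Sset 0 1 (1/2) \<subseteq> bx 10000 (0, 10000, 5000)" by (simp add: bx_def)
qed simp_all


lemma ok5: "chainok 5 10000 [(0, 10000, 5000), (1316, 10000, 1681), (1316, 6356, 512), (1936, 5943, 105), (2051, 4757, 75), (2473, 4587, 36), (2548, 4063, 32), (2811, 3981, 21), (2857, 3718, 19), (3014, 3675, 15)]"
proof -
  have r0: "chainok 5 10000 [(0, 10000, 5000), (1316, 10000, 1681), (1316, 6356, 512), (1936, 5943, 105), (2051, 4757, 75), (2473, 4587, 36), (2548, 4063, 32), (2811, 3981, 21), (2857, 3718, 19), (3014, 3675, 15)]" by simp
  then show ?thesis by this
qed
lemma case5:
  assumes "0 \<le> c" "c < 1"
  shows "\<exists>K. \<forall>k\<ge>K. (psi 5 ^^ k) ` Sset 0 1 c \<subseteq> Sset (ahat 5) (bhat 5) (chat 5)"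
proof (rule finish[OF _ assms _ _ ok5])
  have l: "last [(0, 10000, 5000), (1316, 10000, 1681), (1316, 6356, 512), (1936, 5943, 105), (2051, 4757, 75), (2473, 4587, 36), (2548, 4063, 32), (2811, 3981, 21), (2857, 3718, 19), (3014, 3675, 15)] = (3014, 3675, 15)" by simp
  show "chainok 5 10000 [last [(0, 10000, 5000), (1316, 10000, 1681), (1316, 6356, 512), (1936, 5943, 105), (2051, 4757, 75), (2473, 4587, 36), (2548, 4063, 32), (2811, 3981, 21), (2857, 3718, 19), (3014, 3675, 15)], last [(0, 10000, 5000), (1316, 10000, 1681), (1316, 6356, 512), (1936, 5943, 105), (2051, 4757, 75), (2473, 4587, 36), (2548, 4063, 32), (2811, 3981, 21), (2857, 3718, 19), (3014, 3675, 15)]]" unfolding l by simp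
  show "bx 10000 (last [(0, 10000, 5000), (1316, 10000, 1681), (1316, 6356, 512), (1936, 5943, 105), (2051, 4757, 75), (2473, 4587, 36), (2548, 4063, 32), (2811, 3981, 21), (2857, 3718, 19), (3014, 3675, 15)]) \<subseteq> Sset (ahat 5) (bhat 5) (chat 5)"
    unfolding l bx_def by (simp, rule Sset_mono) (simp_all add: ahat_def bhat_def chat_def)
  show "Sset 0 1 (1/2) \<subseteq> bx 10000 (0, 10000, 5000)" by (simp add: bx_def)
qed simp_all


lemma ok6: "chainok 6 10000 [(0, 10000, 5000), (877, 10000, 1177), (877, 6646, 233), (1332, 6351, 45), (1395, 5150, 35), (1727, 5014, 16), (1774, 4392, 14), (2023, 4314, 9), (2058, 3937, 8), (2247, 3889, 6), (2273, 3642, 5), (2417, 3610, 4), (2437, 3442, 4), (2546, 3420, 3), (2561, 3302, 3), (2643, 3286, 3), (2655, 3203, 3), (2716, 3191, 3)]"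
proof -
  have r0: "chainok 6 10000 [(0, 10000, 5000), (877, 10000, 1177), (877, 6646, 233), (1332, 6351, 45), (1395, 5150, 35), (1727, 5014, 16), (1774, 4392, 14), (2023, 4314, 9), (2058, 3937, 8), (2247, 3889, 6), (2273, 3642, 5), (2417, 3610, 4), (2437, 3442, 4), (2546, 3420, 3), (2561, 3302, 3), (2643, 3286, 3), (2655, 3203, 3), (2716, 3191, 3)]" by simp
  then show ?thesis by this
qed
lemma case6:
  assumes "0 \<le> c" "c < 1"
  shows "\<exists>K. \<forall>k\<ge>K. (psi 6 ^^ k) ` Sset 0 1 c \<subseteq> Sset (ahat 6) (bhat 6) (chat 6)"
proof (rule finish[OF _ assms _ _ ok6])
  have l: "last [(0, 10000, 5000), (877, 10000, 1177), (877, 6646, 233), (1332, 6351, 45), (1395, 5150, 35), (1727, 5014, 16), (1774, 4392, 14), (2023, 4314, 9), (2058, 3937, 8), (2247, 3889, 6), (2273, 3642, 5), (2417, 3610, 4), (2437, 3442, 4), (2546, 3420, 3), (2561, 3302, 3), (2643, 3286, 3), (2655, 3203, 3), (2716, 3191, 3)] = (2716, 3191, 3)" by simp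
  show "chainok 6 10000 [last [(0, 10000, 5000), (877, 10000, 1177), (877, 6646, 233), (1332, 6351, 45), (1395, 5150, 35), (1727, 5014, 16), (1774, 4392, 14), (2023, 4314, 9), (2058, 3937, 8), (2247, 3889, 6), (2273, 3642, 5), (2417, 3610, 4), (2437, 3442, 4), (2546, 3420, 3), (2561, 3302, 3), (2643, 3286, 3), (2655, 3203, 3), (2716, 3191, 3)], last [(0, 10000, 5000), (877, 10000, 1177), (877, 6646, 233), (1332, 6351, 45), (1395, 5150, 35), (1727, 5014, 16), (1774, 4392, 14), (2023, 4314, 9), (2058, 3937, 8), (2247, 3889, 6), (2273, 3642, 5), (2417, 3610, 4), (2437, 3442, 4), (2546, 3420, 3), (2561, 3302, 3), (2643, 3286, 3), (2655, 3203, 3), (2716, 3191, 3)]]" unfolding l by simp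
  show "bx 10000 (last [(0, 10000, 5000), (877, 10000, 1177), (877, 6646, 233), (1332, 6351, 45), (1395, 5150, 35), (1727, 5014, 16), (1774, 4392, 14), (2023, 4314, 9), (2058, 3937, 8), (2247, 3889, 6), (2273, 3642, 5), (2417, 3610, 4), (2437, 3442, 4), (2546, 3420, 3), (2561, 3302, 3), (2643, 3286, 3), (2655, 3203, 3), (2716, 3191, 3)]) \<subseteq> Sset (ahat 6) (bhat 6) (chat 6)"
    unfolding l bx_def by (simp, rule Sset_mono) (simp_all add: ahat_def bhat_def chat_def)
  show "Sset 0 1 (1/2) \<subseteq> bx 10000 (0, 10000, 5000)" by (simp add: bx_def)
qed simp_all


lemma ok7: "chainok 7 10000 [(0, 10000, 5000), (585, 10000, 824), (585, 7084, 108), (881, 6891, 23), (911, 5807, 19), (1118, 5711, 10), (1141, 5118, 9), (1298, 5057, 6), (1317, 4673, 5), (1443, 4630, 4), (1459, 4357, 4), (1564, 4324, 3), (1577, 4117, 3), (1667, 4092, 2), (1678, 3928, 2), (1756, 3908, 2), (1766, 3775, 2), (1835, 3759, 2), (1843, 3647, 2), (1905, 3635, 1), (1912, 3539, 1), (1968, 3528, 1), (1974, 3446, 1), (2024, 3437, 1), (2030, 3366, 1), (2075, 3358, 1), (2080, 3296, 1), (2122, 3290, 1), (2126, 3234, 1), (2164, 3229, 1), (2167, 3179, 1), (2203, 3176, 1), (2205, 3130, 1), (2238, 3128, 1), (2240, 3087, 1), (2270, 3085, 1), (2272, 3049, 1), (2299, 3046, 1), (2301, 3014, 1), (2326, 3012,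 1), (2328, 2983, 1), (2350, 2980, 1), (2353, 2955, 1), (2373, 2952, 1), (2375, 2929, 1), (2394, 2927, 1), (2396, 2906, 1), (2413, 2903, 1), (2415, 2885, 1), (2430, 2883, 1), (2432, 2866, 1), (2446, 2864, 1), (2448, 2849, 1), (2461, 2847, 1), (2463, 2833, 1), (2475, 2831, 1), (2476, 2818, 1), (2488, 2817, 1), (2488, 2804, 1), (2500, 2804, 1), (2500, 2792, 1), (2510, 2792, 1), (2510, 2781, 1), (2520, 2781, 1), (2520, 2771, 1), (2529, 2771, 1), (2529, 2762, 1), (2537, 2762, 1), (2537, 2754, 1), (2544, 2754, 1), (2544, 2746, 1), (2551, 2746, 1), (2551, 2739, 1), (2558, 2739, 1), (2558, 2732, 1), (2564, 2732, 1), (2564, 2726, 1), (2570, 2726, 1), (2570, 2720, 1), (2575, 2720, 1), (2575, 2715, 1), (2580, 2715, 1), (2580, 2710, 1), (2584, 2710, 1), (2584, 2706, 1), (2588, 2706, 1), (2588, 2702, 1), (2592, 2702, 1), (2592, 2698, 1), (2595, 2698, 1), (2595, 2695, 1), (2598, 2695, 1), (2598, 2692, 1), (2601, 2692, 1)]"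
proof -
  have s0: "chainok 7 10000 ([(0, 10000, 5000), (585, 10000, 824), (585, 7084, 108), (881, 6891, 23), (911, 5807, 19), (1118, 5711, 10), (1141, 5118, 9), (1298, 5057, 6), (1317, 4673, 5), (1443, 4630, 4), (1459, 4357, 4), (1564, 4324, 3), (1577, 4117, 3), (1667, 4092, 2), (1678, 3928, 2), (1756, 3908, 2), (1766, 3775, 2), (1835, 3759, 2), (1843, 3647, 2), (1905, 3635, 1), (1912, 3539, 1), (1968, 3528, 1), (1974, 3446, 1), (2024, 3437, 1)] @ [(2030, 3366, 1)])" by simp
  have s1: "chainok 7 10000 ([(2030, 3366, 1), (2075, 3358, 1), (2080, 3296, 1), (2122, 3290, 1), (2126, 3234, 1), (2164, 3229, 1), (2167, 3179, 1), (2203, 3176, 1), (2205, 3130, 1), (2238, 3128, 1), (2240, 3087, 1), (2270, 3085, 1), (2272, 3049, 1), (2299, 3046, 1), (2301, 3014, 1), (2326, 3012, 1), (2328, 2983, 1), (2350, 2980, 1), (2353, 2955, 1), (2373, 2952, 1), (2375, 2929, 1), (2394, 2927, 1), (2396, 2906, 1), (2413, 2903, 1)] @ [(2415, 2885, 1)])" by simp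
  have s2: "chainok 7 10000 ([(2415, 2885, 1), (2430, 2883, 1), (2432, 2866, 1), (2446, 2864, 1), (2448, 2849, 1), (2461, 2847, 1), (2463, 2833, 1), (2475, 2831, 1), (2476, 2818, 1), (2488, 2817, 1), (2488, 2804, 1), (2500, 2804, 1), (2500, 2792, 1), (2510, 2792, 1), (2510, 2781, 1), (2520, 2781, 1), (2520, 2771, 1), (2529, 2771, 1), (2529, 2762, 1), (2537, 2762, 1), (2537, 2754, 1), (2544, 2754, 1), (2544, 2746, 1), (2551, 2746, 1)] @ [(2551, 2739, 1)])" by simp
  have r3: "chainok 7 10000 [(2551, 2739, 1), (2558, 2739, 1), (2558, 2732, 1), (2564, 2732, 1), (2564, 2726, 1), (2570, 2726, 1), (2570, 2720, 1), (2575, 2720, 1), (2575, 2715, 1), (2580, 2715, 1), (2580, 2710, 1), (2584, 2710, 1), (2584, 2706, 1), (2588, 2706, 1), (2588, 2702, 1), (2592, 2702, 1), (2592, 2698, 1), (2595, 2698, 1), (2595, 2695, 1), (2598, 2695, 1), (2598, 2692, 1), (2601, 2692, 1)]" by simp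
  have r2: "chainok 7 10000 [(2415, 2885, 1), (2430, 2883, 1), (2432, 2866, 1), (2446, 2864, 1), (2448, 2849, 1), (2461, 2847, 1), (2463, 2833, 1), (2475, 2831, 1), (2476, 2818, 1), (2488, 2817, 1), (2488, 2804, 1), (2500, 2804, 1), (2500, 2792, 1), (2510, 2792, 1), (2510, 2781, 1), (2520, 2781, 1), (2520, 2771, 1), (2529, 2771, 1), (2529, 2762, 1), (2537, 2762, 1), (2537, 2754, 1), (2544, 2754, 1), (2544, 2746, 1), (2551, 2746, 1), (2551, 2739, 1), (2558, 2739, 1), (2558, 2732, 1), (2564, 2732, 1), (2564, 2726, 1), (2570, 2726, 1), (2570, 2720, 1), (2575, 2720, 1), (2575, 2715, 1), (2580, 2715, 1), (2580, 2710, 1), (2584, 2710, 1), (2584, 2706, 1), (2588, 2706, 1), (2588, 2702, 1), (2592, 2702, 1), (2592, 2698, 1), (2595, 2698, 1), (2595, 2695, 1), (2598, 2695, 1), (2598, 2692, 1), (2601, 2692, 1)]"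
  proof -
    have "chainok 7 10000 ([(2415, 2885, 1), (2430, 2883, 1), (2432, 2866, 1), (2446, 2864, 1), (2448, 2849, 1), (2461, 2847, 1), (2463, 2833, 1), (2475, 2831, 1), (2476, 2818, 1), (2488, 2817, 1), (2488, 2804, 1), (2500, 2804, 1), (2500, 2792, 1), (2510, 2792, 1), (2510, 2781, 1), (2520, 2781, 1), (2520, 2771, 1), (2529, 2771, 1), (2529, 2762, 1), (2537, 2762, 1), (2537, 2754, 1), (2544, 2754, 1), (2544, 2746, 1), (2551, 2746, 1)] @ (2551, 2739, 1) # [(2558, 2739, 1), (2558, 2732, 1), (2564, 2732, 1), (2564, 2726, 1), (2570, 2726, 1), (2570, 2720, 1), (2575, 2720, 1), (2575, 2715, 1), (2580, 2715, 1), (2580, 2710, 1), (2584, 2710, 1), (2584, 2706, 1), (2588, 2706, 1), (2588, 2702, 1), (2592, 2702, 1), (2592, 2698, 1), (2595, 2698, 1), (2595, 2695, 1), (2598, 2695, 1), (2598, 2692, 1), (2601, 2692, 1)])" by (rule chain_join[OF s2 r3])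
    then show ?thesis by (simp only: append.simps)
  qed
  have r1: "chainok 7 10000 [(2030, 3366, 1), (2075, 3358, 1), (2080, 3296, 1), (2122, 3290, 1), (2126, 3234, 1), (2164, 3229, 1), (2167, 3179, 1), (2203, 3176, 1), (2205, 3130, 1), (2238, 3128, 1), (2240, 3087, 1), (2270, 3085, 1), (2272, 3049, 1), (2299, 3046, 1), (2301, 3014, 1), (2326, 3012, 1), (2328, 2983, 1), (2350, 2980, 1), (2353, 2955, 1), (2373, 2952, 1), (2375, 2929, 1), (2394, 2927, 1), (2396, 2906, 1), (2413, 2903, 1), (2415, 2885, 1), (2430, 2883, 1), (2432, 2866, 1), (2446, 2864, 1), (2448, 2849, 1), (2461, 2847, 1), (2463, 2833, 1), (2475, 2831, 1), (2476, 2818, 1), (2488, 2817, 1), (2488, 2804, 1), (2500, 2804, 1), (2500, 2792, 1), (2510, 2792, 1), (2510, 2781, 1), (2520, 2781, 1), (2520, 2771, 1), (2529, 2771, 1), (2529, 2762, 1), (2537, 2762, 1), (2537, 2754, 1), (2544, 2754, 1), (2544, 2746, 1), (2551, 2746, 1), (2551, 2739, 1), (2558, 2739, 1), (2558, 2732, 1), (2564, 2732, 1), (2564, 2726, 1), (2570, 2726, 1), (2570, 2720, 1), (2575, 2720, 1), (2575, 2715, 1), (2580, 2715, 1), (2580, 2710, 1), (2584, 2710, 1), (2584, 2706, 1), (2588, 2706, 1), (2588, 2702, 1), (2592, 2702, 1), (2592, 2698, 1), (2595, 2698, 1), (2595, 2695, 1), (2598, 2695, 1), (2598, 2692, 1),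 (2601, 2692, 1)]"
  proof -
    have "chainok 7 10000 ([(2030, 3366, 1), (2075, 3358, 1), (2080, 3296, 1), (2122, 3290, 1), (2126, 3234, 1), (2164, 3229, 1), (2167, 3179, 1), (2203, 3176, 1), (2205, 3130, 1), (2238, 3128, 1), (2240, 3087, 1), (2270, 3085, 1), (2272, 3049, 1), (2299, 3046, 1), (2301, 3014, 1), (2326, 3012, 1), (2328, 2983, 1), (2350, 2980, 1), (2353, 2955, 1), (2373, 2952, 1), (2375, 2929, 1), (2394, 2927, 1), (2396, 2906, 1), (2413, 2903, 1)] @ (2415, 2885, 1) # [(2430, 2883, 1), (2432, 2866, 1), (2446, 2864, 1), (2448, 2849, 1), (2461, 2847, 1), (2463, 2833, 1), (2475, 2831, 1), (2476, 2818, 1), (2488, 2817, 1), (2488, 2804, 1), (2500, 2804, 1), (2500, 2792, 1), (2510, 2792, 1), (2510, 2781, 1), (2520, 2781, 1), (2520, 2771, 1), (2529, 2771, 1), (2529, 2762, 1), (2537, 2762, 1), (2537, 2754, 1), (2544, 2754, 1), (2544, 2746, 1), (2551, 2746, 1), (2551, 2739, 1), (2558, 2739, 1), (2558, 2732, 1), (2564, 2732, 1), (2564, 2726, 1), (2570, 2726, 1), (2570, 2720, 1), (2575, 2720, 1), (2575, 2715, 1), (2580, 2715, 1), (2580, 2710, 1), (2584, 2710, 1), (2584, 2706, 1), (2588, 2706, 1), (2588, 2702, 1), (2592, 2702, 1), (2592, 2698, 1), (2595, 2698, 1), (2595, 2695, 1), (2598, 2695, 1), (2598, 2692, 1), (2601,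 2692, 1)])" by (rule chain_join[OF s1 r2])
    then show ?thesis by (simp only: append.simps)
  qed
  have r0: "chainok 7 10000 [(0, 10000, 5000), (585, 10000, 824), (585, 7084, 108), (881, 6891, 23), (911, 5807, 19), (1118, 5711, 10), (1141, 5118, 9), (1298, 5057, 6), (1317, 4673, 5), (1443, 4630, 4), (1459, 4357, 4), (1564, 4324, 3), (1577, 4117, 3), (1667, 4092, 2), (1678, 3928, 2), (1756, 3908, 2), (1766, 3775, 2), (1835, 3759, 2), (1843, 3647, 2), (1905, 3635, 1), (1912, 3539, 1), (1968, 3528, 1), (1974, 3446, 1), (2024, 3437, 1), (2030, 3366, 1), (2075, 3358, 1), (2080, 3296, 1), (2122, 3290, 1), (2126, 3234, 1), (2164, 3229, 1), (2167, 3179, 1), (2203, 3176, 1), (2205, 3130, 1), (2238, 3128, 1), (2240, 3087, 1), (2270, 3085, 1), (2272, 3049, 1), (2299, 3046, 1), (2301, 3014, 1), (2326, 3012, 1), (2328, 2983, 1), (2350, 2980, 1), (2353, 2955, 1), (2373, 2952, 1), (2375, 2929, 1), (2394, 2927, 1), (2396, 2906, 1), (2413, 2903, 1), (2415, 2885, 1), (2430, 2883, 1), (2432, 2866, 1), (2446, 2864, 1), (2448, 2849, 1), (2461, 2847, 1), (2463, 2833, 1), (2475, 2831, 1), (2476, 2818, 1), (2488, 2817, 1), (2488, 2804, 1), (2500, 2804, 1), (2500, 2792, 1), (2510, 2792, 1), (2510, 2781, 1), (2520, 2781, 1), (2520, 2771, 1), (2529, 2771, 1), (2529, 2762, 1),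 (2537, 2762, 1), (2537, 2754, 1), (2544, 2754, 1), (2544, 2746, 1), (2551, 2746, 1), (2551, 2739, 1), (2558, 2739, 1), (2558, 2732, 1), (2564, 2732, 1), (2564, 2726, 1), (2570, 2726, 1), (2570, 2720, 1), (2575, 2720, 1), (2575, 2715, 1), (2580, 2715, 1), (2580, 2710, 1), (2584, 2710, 1), (2584, 2706, 1), (2588, 2706, 1), (2588, 2702, 1), (2592, 2702, 1), (2592, 2698, 1), (2595, 2698, 1), (2595, 2695, 1), (2598, 2695, 1), (2598, 2692, 1), (2601, 2692, 1)]"
  proof -
    have "chainok 7 10000 ([(0, 10000, 5000), (585, 10000, 824), (585, 7084, 108), (881, 6891, 23), (911, 5807, 19), (1118, 5711, 10), (1141, 5118, 9), (1298, 5057, 6), (1317, 4673, 5), (1443, 4630, 4), (1459, 4357, 4), (1564, 4324, 3), (1577, 4117, 3), (1667, 4092, 2), (1678, 3928, 2), (1756, 3908, 2), (1766, 3775, 2), (1835, 3759, 2), (1843, 3647, 2), (1905, 3635, 1), (1912, 3539, 1), (1968, 3528, 1), (1974, 3446, 1), (2024, 3437, 1)] @ (2030, 3366, 1) # [(2075, 3358, 1), (2080, 3296, 1), (2122, 3290, 1), (2126, 3234, 1), (2164, 3229, 1), (2167, 3179, 1), (2203, 3176, 1), (2205, 3130, 1), (2238, 3128, 1), (2240, 3087, 1), (2270, 3085, 1), (2272, 3049, 1), (2299, 3046, 1), (2301, 3014, 1), (2326, 3012, 1), (2328, 2983, 1), (2350, 2980, 1), (2353, 2955, 1), (2373, 2952,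 1), (2375, 2929, 1), (2394, 2927, 1), (2396, 2906, 1), (2413, 2903, 1), (2415, 2885, 1), (2430, 2883, 1), (2432, 2866, 1), (2446, 2864, 1), (2448, 2849, 1), (2461, 2847, 1), (2463, 2833, 1), (2475, 2831, 1), (2476, 2818, 1), (2488, 2817, 1), (2488, 2804, 1), (2500, 2804, 1), (2500, 2792, 1), (2510, 2792, 1), (2510, 2781, 1), (2520, 2781, 1), (2520, 2771, 1), (2529, 2771, 1), (2529, 2762, 1), (2537, 2762, 1), (2537, 2754, 1), (2544, 2754, 1), (2544, 2746, 1), (2551, 2746, 1), (2551, 2739, 1), (2558, 2739, 1), (2558, 2732, 1), (2564, 2732, 1), (2564, 2726, 1), (2570, 2726, 1), (2570, 2720, 1), (2575, 2720, 1), (2575, 2715, 1), (2580, 2715, 1), (2580, 2710, 1), (2584, 2710, 1), (2584, 2706, 1), (2588, 2706, 1), (2588, 2702, 1), (2592, 2702, 1), (2592, 2698, 1), (2595, 2698, 1), (2595, 2695, 1), (2598, 2695, 1), (2598, 2692, 1), (2601, 2692, 1)])" by (rule chain_join[OF s0 r1])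
    then show ?thesis by (simp only: append.simps)
  qed
  then show ?thesis by this
qed
lemma case7:
  assumes "0 \<le> c" "c < 1"
  shows "\<exists>K. \<forall>k\<ge>K. (psi 7 ^^ k) ` Sset 0 1 c \<subseteq> Sset (ahat 7) (bhat 7) (chat 7)"
proof (rule finish[OF _ assms _ _ ok7])
  have l: "last [(0, 10000, 5000), (585, 10000, 824), (585, 7084, 108), (881, 6891, 23), (911, 5807, 19), (1118, 5711, 10), (1141, 5118, 9), (1298, 5057, 6), (1317, 4673, 5), (1443, 4630, 4), (1459, 4357, 4), (1564, 4324, 3), (1577, 4117, 3), (1667, 4092, 2), (1678, 3928, 2), (1756, 3908, 2), (1766, 3775, 2), (1835, 3759, 2), (1843, 3647, 2), (1905, 3635, 1), (1912, 3539, 1), (1968, 3528, 1), (1974, 3446, 1), (2024, 3437, 1), (2030, 3366, 1), (2075, 3358, 1), (2080, 3296, 1), (2122, 3290, 1), (2126, 3234, 1), (2164, 3229, 1), (2167, 3179, 1), (2203, 3176, 1), (2205, 3130, 1), (2238, 3128, 1), (2240, 3087, 1), (2270, 3085, 1), (2272, 3049, 1), (2299, 3046, 1), (2301, 3014, 1), (2326, 3012, 1), (2328, 2983, 1), (2350, 2980, 1), (2353, 2955, 1), (2373, 2952, 1), (2375, 2929, 1), (2394, 2927, 1), (2396, 2906, 1), (2413, 2903, 1), (2415, 2885, 1), (2430, 2883, 1), (2432, 2866, 1), (2446, 2864, 1), (2448, 2849, 1), (2461, 2847, 1), (2463, 2833, 1), (2475, 2831, 1), (2476, 2818, 1), (2488,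 2817, 1), (2488, 2804, 1), (2500, 2804, 1), (2500, 2792, 1), (2510, 2792, 1), (2510, 2781, 1), (2520, 2781, 1), (2520, 2771, 1), (2529, 2771, 1), (2529, 2762, 1), (2537, 2762, 1), (2537, 2754, 1), (2544, 2754, 1), (2544, 2746, 1), (2551, 2746, 1), (2551, 2739, 1), (2558, 2739, 1), (2558, 2732, 1), (2564, 2732, 1), (2564, 2726, 1), (2570, 2726, 1), (2570, 2720, 1), (2575, 2720, 1), (2575, 2715, 1), (2580, 2715, 1), (2580, 2710, 1), (2584, 2710, 1), (2584, 2706, 1), (2588, 2706, 1), (2588, 2702, 1), (2592, 2702, 1), (2592, 2698, 1), (2595, 2698, 1), (2595, 2695, 1), (2598, 2695, 1), (2598, 2692, 1), (2601, 2692, 1)] = (2601, 2692, 1)" by simp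
  show "chainok 7 10000 [last [(0, 10000, 5000), (585, 10000, 824), (585, 7084, 108), (881, 6891, 23), (911, 5807, 19), (1118, 5711, 10), (1141, 5118, 9), (1298, 5057, 6), (1317, 4673, 5), (1443, 4630, 4), (1459, 4357, 4), (1564, 4324, 3), (1577, 4117, 3), (1667, 4092, 2), (1678, 3928, 2), (1756, 3908, 2), (1766, 3775, 2), (1835, 3759, 2), (1843, 3647, 2), (1905, 3635, 1), (1912, 3539, 1), (1968, 3528, 1), (1974, 3446, 1), (2024, 3437, 1), (2030, 3366, 1), (2075, 3358, 1), (2080, 3296, 1), (2122, 3290, 1), (2126, 3234, 1), (2164, 3229, 1), (2167, 3179, 1), (2203, 3176, 1), (2205, 3130, 1), (2238, 3128, 1), (2240, 3087, 1), (2270, 3085, 1), (2272, 3049, 1), (2299, 3046, 1), (2301, 3014, 1), (2326, 3012, 1), (2328, 2983, 1), (2350, 2980, 1), (2353, 2955, 1), (2373, 2952, 1), (2375, 2929, 1), (2394, 2927, 1), (2396, 2906, 1), (2413, 2903, 1), (2415, 2885, 1), (2430, 2883, 1), (2432, 2866, 1), (2446, 2864, 1), (2448, 2849, 1), (2461, 2847, 1), (2463, 2833, 1), (2475, 2831, 1), (2476, 2818, 1), (2488, 2817, 1), (2488, 2804, 1), (2500, 2804, 1), (2500, 2792, 1), (2510, 2792, 1), (2510, 2781, 1), (2520, 2781, 1), (2520, 2771, 1), (2529, 2771, 1), (2529, 2762, 1), (2537, 2762, 1), (2537, 2754, 1), (2544, 2754, 1), (2544, 2746, 1), (2551, 2746,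 1), (2551, 2739, 1), (2558, 2739, 1), (2558, 2732, 1), (2564, 2732, 1), (2564, 2726, 1), (2570, 2726, 1), (2570, 2720, 1), (2575, 2720, 1), (2575, 2715, 1), (2580, 2715, 1), (2580, 2710, 1), (2584, 2710, 1), (2584, 2706, 1), (2588, 2706, 1), (2588, 2702, 1), (2592, 2702, 1), (2592, 2698, 1), (2595, 2698, 1), (2595, 2695, 1), (2598, 2695, 1), (2598, 2692, 1), (2601, 2692, 1)], last [(0, 10000, 5000), (585, 10000, 824), (585, 7084, 108), (881, 6891, 23), (911, 5807, 19), (1118, 5711, 10), (1141, 5118, 9), (1298, 5057, 6), (1317, 4673, 5), (1443, 4630, 4), (1459, 4357, 4), (1564, 4324, 3), (1577, 4117, 3), (1667, 4092, 2), (1678, 3928, 2), (1756, 3908, 2), (1766, 3775, 2), (1835, 3759, 2), (1843, 3647, 2), (1905, 3635, 1), (1912, 3539, 1), (1968, 3528, 1), (1974, 3446, 1), (2024, 3437, 1), (2030, 3366, 1), (2075, 3358, 1), (2080, 3296, 1), (2122, 3290, 1), (2126, 3234, 1), (2164, 3229, 1), (2167, 3179, 1), (2203, 3176, 1), (2205, 3130, 1), (2238, 3128, 1), (2240, 3087, 1), (2270, 3085, 1), (2272, 3049, 1), (2299, 3046, 1), (2301, 3014, 1), (2326, 3012, 1), (2328, 2983, 1), (2350, 2980, 1), (2353, 2955, 1), (2373, 2952, 1), (2375, 2929, 1), (2394, 2927, 1), (2396, 2906, 1), (2413, 2903, 1), (2415, 2885, 1), (2430, 2883, 1), (2432, 2866,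 1), (2446, 2864, 1), (2448, 2849, 1), (2461, 2847, 1), (2463, 2833, 1), (2475, 2831, 1), (2476, 2818, 1), (2488, 2817, 1), (2488, 2804, 1), (2500, 2804, 1), (2500, 2792, 1), (2510, 2792, 1), (2510, 2781, 1), (2520, 2781, 1), (2520, 2771, 1), (2529, 2771, 1), (2529, 2762, 1), (2537, 2762, 1), (2537, 2754, 1), (2544, 2754, 1), (2544, 2746, 1), (2551, 2746, 1), (2551, 2739, 1), (2558, 2739, 1), (2558, 2732, 1), (2564, 2732, 1), (2564, 2726, 1), (2570, 2726, 1), (2570, 2720, 1), (2575, 2720, 1), (2575, 2715, 1), (2580, 2715, 1), (2580, 2710, 1), (2584, 2710, 1), (2584, 2706, 1), (2588, 2706, 1), (2588, 2702, 1), (2592, 2702, 1), (2592, 2698, 1), (2595, 2698, 1), (2595, 2695, 1), (2598, 2695, 1), (2598, 2692, 1), (2601, 2692, 1)]]" unfolding l by simp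
  show "bx 10000 (last [(0, 10000, 5000), (585, 10000, 824), (585, 7084, 108), (881, 6891, 23), (911, 5807, 19), (1118, 5711, 10), (1141, 5118, 9), (1298, 5057, 6), (1317, 4673, 5), (1443, 4630, 4), (1459, 4357, 4), (1564, 4324, 3), (1577, 4117, 3), (1667, 4092, 2), (1678, 3928, 2), (1756, 3908, 2), (1766, 3775, 2), (1835, 3759, 2), (1843, 3647, 2), (1905, 3635, 1), (1912, 3539, 1), (1968, 3528, 1), (1974, 3446, 1), (2024, 3437, 1), (2030, 3366, 1), (2075, 3358, 1), (2080, 3296, 1), (2122, 3290, 1), (2126, 3234, 1), (2164, 3229, 1), (2167, 3179, 1), (2203, 3176, 1), (2205, 3130, 1), (2238, 3128, 1), (2240, 3087, 1), (2270, 3085, 1), (2272, 3049, 1), (2299, 3046, 1), (2301, 3014, 1), (2326, 3012, 1), (2328, 2983, 1), (2350, 2980, 1), (2353, 2955, 1), (2373, 2952, 1), (2375, 2929, 1), (2394, 2927, 1), (2396, 2906, 1), (2413, 2903, 1), (2415, 2885, 1), (2430, 2883, 1), (2432, 2866, 1), (2446, 2864, 1), (2448, 2849, 1), (2461, 2847, 1), (2463, 2833, 1), (2475, 2831, 1), (2476, 2818, 1), (2488, 2817, 1), (2488, 2804, 1), (2500, 2804, 1), (2500, 2792, 1), (2510, 2792, 1), (2510, 2781, 1), (2520, 2781, 1), (2520, 2771, 1), (2529, 2771, 1), (2529, 2762, 1), (2537, 2762, 1), (2537, 2754, 1), (2544, 2754, 1), (2544, 2746, 1), (2551, 2746, 1),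 (2551, 2739, 1), (2558, 2739, 1), (2558, 2732, 1), (2564, 2732, 1), (2564, 2726, 1), (2570, 2726, 1), (2570, 2720, 1), (2575, 2720, 1), (2575, 2715, 1), (2580, 2715, 1), (2580, 2710, 1), (2584, 2710, 1), (2584, 2706, 1), (2588, 2706, 1), (2588, 2702, 1), (2592, 2702, 1), (2592, 2698, 1), (2595, 2698, 1), (2595, 2695, 1), (2598, 2695, 1), (2598, 2692, 1), (2601, 2692, 1)]) \<subseteq> Sset (ahat 7) (bhat 7) (chat 7)"
    unfolding l bx_def by (simp, rule Sset_mono) (simp_all add: ahat_def bhat_def chat_def)
  show "Sset 0 1 (1/2) \<subseteq> bx 10000 (0, 10000, 5000)" by (simp add: bx_def)
qed simp_all

theorem proposition2p8:
  fixes d :: nat and c :: real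
  assumes "2 \<le> d" and "d \<le> 7" and "0 \<le> c" and "c < 1"
  shows "\<exists>K. \<forall>k\<ge>K. (psi d ^^ k) ` Sset 0 1 c \<subseteq> Sset (ahat d) (bhat d) (chat d)"
proof -
  have "d = 2 \<or> d = 3 \<or> d = 4 \<or> d = 5 \<or> d = 6 \<or> d = 7" using assms(1,2) by linarith
  then show ?thesis
    using case2[OF assms(3,4)] case3[OF assms(3,4)] case4[OF assms(3,4)]
      case5[OF assms(3,4)] case6[OF assms(3,4)] case7[OF assms(3,4)] by blast
qed

end
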